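(* The lexicographically least infinite binary overlap-free word is $001001\,\overline{\mathbf{t}}$.
   Context: An overlap is a word $axaxa$ with $a$ a letter and $x$ a (possibly empty) word; a word is overlap-free if it contains no overlap as a factor. $\mu$ is the morphism $0\mapsto01$, $1\mapsto10$ on $\{0,1\}$, and $\overline{\mathbf{t}}=\mu^\omega(1)=1001011001101001\cdots$ is the fixed point of $\mu$ beginning with $1$. Infinite binary words are ordered lexicographically with $0<1$. *)

theory Defs
  imports Main
begin

definition binary_word :: "(nat \<Rightarrow> nat) \<Rightarrow> bool" where
  "binary_word w \<longleftrightarrow> (\<forall>i. w i \<in> {0, 1})"

fun mu :: "nat list \<Rightarrow> nat list" where
  "mu [] = []"
| "mu (a # xs) = (if a = 0 then [0, 1] else [1, 0]) @ mu xs"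

text \<open>tbar = mu^omega(1): the n-th letter is the n-th letter of mu^(n+1)(1),
  a word of length 2^(n+1) which is a prefix of all longer iterates.\<close>
definition tbar :: "nat \<Rightarrow> nat" where
  "tbar n = ((mu ^^ Suc n) [1]) ! n"

definition is_overlap :: "nat list \<Rightarrow> bool" where
  "is_overlap u \<longleftrightarrow> (\<exists>a x. u = [a] @ x @ [a] @ x @ [a])"

definition factor :: "(nat \<Rightarrow> nat) \<Rightarrow> nat \<Rightarrow> nat \<Rightarrow> nat list" where
  "factor w i n = map (\<lambda>j. w (i + j)) [0..<n]"

definition overlap_free :: "(nat \<Rightarrow> nat) \<Rightarrow> bool" where
  "overlap_free w \<longleftrightarrow> \<not> (\<exists>i n. is_overlap (factor w i n))"

definition lex_less :: "(nat \<Rightarrow> nat) \<Rightarrow> (nat \<Rightarrow> nat) \<Rightarrow> bool" where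
  "lex_less w v \<longleftrightarrow> (\<exists>n. (\<forall>i<n. w i = v i) \<and> w n < v n)"

definition lex_le :: "(nat \<Rightarrow> nat) \<Rightarrow> (nat \<Rightarrow> nat) \<Rightarrow> bool" where
  "lex_le w v \<longleftrightarrow> w = v \<or> lex_less w v"

definition prepend :: "nat list \<Rightarrow> (nat \<Rightarrow> nat) \<Rightarrow> nat \<Rightarrow> nat" where
  "prepend u w n = (if n < length u then u ! n else w (n - length u))"

end

theory Submission
  imports Defs
begin

definition bin :: "(nat \<Rightarrow> nat) \<Rightarrow> bool" where "bin w \<longleftrightarrow> (\<forall>i. w i \<le> 1)"
definition mi :: "(nat \<Rightarrow> nat) \<Rightarrow> nat \<Rightarrow> nat" where
  "mi y n = (if even n then y (n div 2) else 1 - y (n div 2))"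
definition ovl :: "(nat \<Rightarrow> nat) \<Rightarrow> nat \<Rightarrow> nat \<Rightarrow> bool" where
  "ovl w i p \<longleftrightarrow> p \<ge> 1 \<and> (\<forall>j\<le>p. w (i+j) = w (i+j+p))"
definition sqp :: "(nat \<Rightarrow> nat) \<Rightarrow> nat \<Rightarrow> bool" where
  "sqp w s \<longleftrightarrow> s \<ge> 1 \<and> (\<forall>j<s. w j = w (j+s))"
definition OF :: "(nat \<Rightarrow> nat) \<Rightarrow> bool" where
  "OF w \<longleftrightarrow> (\<forall>i p. \<not> ovl w i p)"

lemma factor_Suc: "factor w i (Suc n) = factor w i n @ [w (i+n)]"
  by (simp add: factor_def)

lemma factor_add: "factor w i (m+n) = factor w i m @ factor w (i+m) n"
  by (induction n) (simp_all add: factor_Suc factor_def add.assoc)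

lemma length_factor[simp]: "length (factor w i n) = n"
  by (simp add: factor_def)

lemma factor_nth: "j < n \<Longrightarrow> factor w i n ! j = w (i+j)"
  by (simp add: factor_def)

lemma ovl_imp_overlap:
  assumes "ovl w i p" shows "is_overlap (factor w i (2*p+1))"
proof -
  have p1: "p \<ge> 1" and per: "\<And>j. j \<le> p \<Longrightarrow> w (i+j) = w (i+j+p)" using assms by (auto simp: ovl_def)
  define X where "X = factor w (i+1) (p-1)"
  have f1: "factor w i p = w i # X"
  proof -
    have "factor w i p = factor w i (1 + (p-1))" using p1 by simp
    also have "\<dots> = factor w i 1 @ X" unfolding X_def by (rule factor_add)
    finally show ?thesis by (simp add: factor_def)
  qed
  have f2: "factor w (i+p) p = factor w i p"
    unfolding factor_def using per by (auto simp: add.commute add.left_commute)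
  have l: "w (i + 2*p) = w i" using per[of 0] per[of p] by (simp add: mult_2 add.assoc)
  have "factor w i (2*p+1) = factor w i p @ factor w (i+p) p @ [w (i + 2*p)]"
    by (simp add: factor_Suc mult_2 factor_add)
  also have "\<dots> = [w i] @ X @ [w i] @ X @ [w i]" using f1 f2 l by simp
  finally show ?thesis unfolding is_overlap_def by blast
qed

lemma overlap_imp_ovl:
  assumes "is_overlap (factor w i n)" shows "\<exists>p. ovl w i p"
proof -
  obtain a x where e: "factor w i n = [a] @ x @ [a] @ x @ [a]" using assms unfolding is_overlap_def by blast
  define p where "p = Suc (length x)"
  have n: "n = 2*p+1" using arg_cong[OF e, of length] by (simp add: p_def)
  have "w (i+j) = w (i+j+p)" if "j \<le> p" for j
  proof -
    have "w (i+j) = factor w i n ! j" using that n by (simp add: factor_nth)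
    moreover have "w (i+j+p) = factor w i n ! (j+p)" using that n by (simp add: factor_nth add.assoc)
    moreover have "([a] @ x @ [a] @ x @ [a]) ! j = ([a] @ x @ [a] @ x @ [a]) ! (j+p)"
    proof (cases "j < p")
      case True
      then show ?thesis unfolding p_def by (auto simp: nth_append nth_Cons split: nat.splits)
    next
      case False
      then have "j = p" using that by simp
      then show ?thesis unfolding p_def by (simp add: nth_append)
    qed
    ultimately show ?thesis using e by simp
  qed
  then have "ovl w i p" unfolding ovl_def p_def by auto
  then show ?thesis by blast
qed

lemma OF_iff: "overlap_free w \<longleftrightarrow> OF w"
  unfolding overlap_free_def OF_def using ovl_imp_overlap overlap_imp_ovl by blast

lemma mi_ne: "mi y (2*k) \<noteq> mi y (Suc (2*k))"
  by (simp add: mi_def) arith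

lemma mi_sq_odd: "mi y m = mi y (Suc m) \<Longrightarrow> odd m"
  using mi_ne by (metis evenE)

lemma bin_mi: "bin y \<Longrightarrow> bin (mi y)"
  by (auto simp: bin_def mi_def)

lemma alt:
  assumes "bin w" "\<forall>m. i \<le> m \<longrightarrow> m < i + k \<longrightarrow> w m \<noteq> w (Suc m)"
  shows "w (i + k) = (if even k then w i else 1 - w i)"
  using assms(2)
proof (induction k)
  case 0 then show ?case by simp
next
  case (Suc k)
  have h: "w (i+k) \<noteq> w (Suc (i+k))" using Suc.prems by auto
  have b: "w (i+k) \<le> 1" "w (Suc (i+k)) \<le> 1" "w i \<le> 1" using assms(1) by (auto simp: bin_def)
  have "w (i+k) = (if even k then w i else 1 - w i)" using Suc by auto
  then show ?case using h b by auto
qed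

lemma mi_even_p:
  assumes "bin y" "ovl (mi y) i p" shows "even p"
proof (rule ccontr)
  assume op: "odd p"
  have p1: "p \<ge> 1" and per: "\<And>j. j \<le> p \<Longrightarrow> mi y (i+j) = mi y (i+j+p)" using assms by (auto simp: ovl_def)
  have bm: "bin (mi y)" using assms(1) bin_mi by blast
  show False
  proof (cases "\<forall>m. i \<le> m \<longrightarrow> m < i + p \<longrightarrow> mi y m \<noteq> mi y (Suc m)")
    case True
    from alt[OF bm True] op have "mi y (i+p) = 1 - mi y i" by simp
    moreover have "mi y (i+p) = mi y i" using per[of 0] by simp
    ultimately show False by arith
  next
    case False
    then obtain m where m: "i \<le> m" "m < i+p" "mi y m = mi y (Suc m)" by auto
    have "mi y (m+p) = mi y m" using per[of "m-i"] m by simp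
    moreover have "mi y (Suc m + p) = mi y (Suc m)" using per[of "Suc m - i"] m by simp
    ultimately have "mi y (m+p) = mi y (Suc (m+p))" using m by simp
    then have "odd (m+p)" by (rule mi_sq_odd)
    moreover have "odd m" using m(3) by (rule mi_sq_odd)
    ultimately show False using op by simp
  qed
qed

lemma mi_desc:
  assumes "bin y" "ovl (mi y) i p" shows "\<exists>i'. ovl y i' (p div 2)"
proof -
  have p1: "p \<ge> 1" and per: "\<And>j. j \<le> p \<Longrightarrow> mi y (i+j) = mi y (i+j+p)" using assms by (auto simp: ovl_def)
  obtain q where q: "p = 2*q" using mi_even_p[OF assms] by blast
  have q1: "q \<ge> 1" using p1 q by simp
  show ?thesis
  proof (cases "even i")
    case True
    then obtain s where s: "i = 2*s" by blast
    have "y (s+j) = y (s+j+q)" if "j \<le> q" for j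
      using per[of "2*j"] that s q by (simp add: mi_def algebra_simps)
    then have "ovl y s q" using q1 by (simp add: ovl_def)
    then show ?thesis using q by auto
  next
    case False
    then obtain s where s: "i = 2*s+1" using oddE by blast
    have "y (s+j) = y (s+j+q)" if "j \<le> q" for j
    proof (cases "j = 0")
      case True
      have "mi y (2*s+1) = mi y (2*s+1+2*q)" using per[of 0] s q by simp
      then have "1 - y s = 1 - y (s+q)" by (simp add: mi_def algebra_simps)
      moreover have "y s \<le> 1" "y (s+q) \<le> 1" using assms(1) by (auto simp: bin_def)
      ultimately show ?thesis using True by simp
    next
      case False
      have A: "mi y (i + (2*j-1)) = mi y (i + (2*j-1) + p)" using per[of "2*j-1"] that q by simp
      have B: "i + (2*j-1) = 2*(s+j)" "i + (2*j-1) + p = 2*(s+j+q)" using s q False by auto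
      from A have "mi y (2*(s+j)) = mi y (2*(s+j+q))" unfolding B(1) B(2)[unfolded B(1)] .
      then show ?thesis by (simp add: mi_def)
    qed
    then have "ovl y s q" using q1 by (simp add: ovl_def)
    then show ?thesis using q by auto
  qed
qed

lemma mi_p: "bin y \<Longrightarrow> ovl (mi y) i p \<Longrightarrow> 1 \<le> p div 2 \<and> p div 2 < p"
  using mi_even_p[of y i p] by (auto simp: ovl_def elim!: evenE)

lemma OF_mi: assumes "bin y" "OF y" shows "OF (mi y)"
  using assms mi_desc unfolding OF_def by blast

lemma ovl_mi: assumes "ovl y i p" shows "ovl (mi y) (2*i) (2*p)"
proof -
  have "mi y (2*i+j) = mi y (2*i+j+2*p)" if "j \<le> 2*p" for j
  proof -
    have "y (i + j div 2) = y (i + j div 2 + p)" using assms that by (auto simp: ovl_def)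
    moreover have "(2*i+j) div 2 = i + j div 2" "(2*i+j+2*p) div 2 = i + j div 2 + p" by auto
    ultimately have h: "y ((2*i+j) div 2) = y ((2*i+j+2*p) div 2)" by (simp add: add.commute add.left_commute)
    have "even (2*i+j+2*p) = even (2*i+j)" by simp
    then show ?thesis using h unfolding mi_def by (simp add: ac_simps)
  qed
  then show ?thesis using assms by (auto simp: ovl_def)
qed

lemma mu_append: "mu (xs @ ys) = mu xs @ mu ys"
  by (induction xs) auto

lemma length_mu: "length (mu xs) = 2 * length xs"
  by (induction xs) auto

lemma set_mu: "set (mu xs) \<subseteq> {0,1}"
  by (induction xs) auto

lemma mu_nth: "i < length xs \<Longrightarrow> mu xs ! (2*i) = (if xs ! i = 0 then 0 else 1) \<and> mu xs ! (Suc (2*i)) = (if xs ! i = 0 then 1 else 0)"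
proof (induction xs arbitrary: i)
  case Nil then show ?case by simp
next
  case (Cons a xs)
  show ?case
  proof (cases i)
    case 0 then show ?thesis by simp
  next
    case (Suc k)
    then have "mu (a # xs) ! (2*i) = mu xs ! (2*k)" "mu (a # xs) ! Suc (2*i) = mu xs ! Suc (2*k)"
      by (auto simp: nth_append)
    then show ?thesis using Cons Suc by simp
  qed
qed

lemma lt2: "n < 2 ^ Suc n" by (induction n) auto

abbreviation M :: "nat \<Rightarrow> nat list" where "M k \<equiv> (mu ^^ k) [1]"

lemma M_Suc: "M (Suc k) = mu (M k)" by simp

lemma length_M: "length (M k) = 2 ^ k"
  by (induction k) (auto simp: length_mu)

lemma M_prefix: "\<exists>r. M (Suc k) = M k @ r"
proof (induction k)
  case 0 then show ?case by simp
next
  case (Suc k)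
  then obtain r where "M (Suc k) = M k @ r" by blast
  then have "M (Suc (Suc k)) = M (Suc k) @ mu r" by (simp add: mu_append)
  then show ?case by blast
qed

lemma M_nth_mono: "k \<le> m \<Longrightarrow> n < 2^k \<Longrightarrow> M m ! n = M k ! n"
proof (induction m)
  case 0 then show ?case by simp
next
  case (Suc m)
  show ?case
  proof (cases "k = Suc m")
    case True then show ?thesis by simp
  next
    case False
    then have km: "k \<le> m" using Suc by simp
    obtain r where r: "M (Suc m) = M m @ r" using M_prefix by blast
    have "(2::nat)^k \<le> 2^m" using km by (rule power_increasing) simp
    then have "n < 2^m" using Suc.prems(2) by linarith
    then have "n < length (M m)" using length_M[of m] by (simp only:)
    then have "M (Suc m) ! n = M m ! n" using r by (simp add: nth_append)
    then show ?thesis using Suc.IH km Suc.prems by simp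
  qed
qed

lemma tbar_M: "n < 2^k \<Longrightarrow> tbar n = M k ! n"
proof -
  assume a: "n < 2^k"
  have b: "n < 2 ^ Suc n" by (rule lt2)
  have "tbar n = M (max k (Suc n)) ! n" unfolding tbar_def using M_nth_mono[OF _ b, of "max k (Suc n)"] by simp
  also have "\<dots> = M k ! n" using M_nth_mono[OF _ a, of "max k (Suc n)"] by simp
  finally show ?thesis .
qed

lemma bin_tbar: "bin tbar"
proof -
  have "tbar n \<in> set (M (Suc n))" for n
  proof -
    have "n < length (M (Suc n))" using length_M[of "Suc n"] lt2[of n] by (simp only:)
    then show ?thesis unfolding tbar_def by (rule nth_mem)
  qed
  moreover have "set (M (Suc n)) \<subseteq> {0,1}" for n using set_mu by simp
  ultimately have h: "tbar n \<in> {0,1}" for n by blast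
  have "tbar n \<le> 1" for n using h[of n] by auto
  then show ?thesis unfolding bin_def by blast
qed

lemma tbar_rec: "tbar (2*n) = tbar n \<and> tbar (Suc (2*n)) = 1 - tbar n"
proof -
  have a: "n < 2 ^ Suc n" by (rule lt2)
  have l: "n < length (M (Suc n))" using a length_M[of "Suc n"] by (simp only:)
  have b: "2*n < 2 ^ Suc (Suc n)" "Suc (2*n) < 2 ^ Suc (Suc n)" using a by auto
  have t01: "tbar n = 0 \<or> tbar n = 1" using bin_tbar unfolding bin_def by (metis le_neq_implies_less less_one)
  have tm: "M (Suc n) ! n = tbar n" using tbar_M[OF a] by simp
  have "tbar (2*n) = M (Suc (Suc n)) ! (2*n)" using tbar_M[OF b(1)] .
  also have "\<dots> = (if M (Suc n) ! n = 0 then 0 else 1)" using mu_nth[OF l] by (simp only: M_Suc[of "Suc n"])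
  also have "\<dots> = tbar n" using t01 tm by auto
  finally have 1: "tbar (2*n) = tbar n" .
  have "tbar (Suc (2*n)) = M (Suc (Suc n)) ! (Suc (2*n))" using tbar_M[OF b(2)] .
  also have "\<dots> = (if M (Suc n) ! n = 0 then 1 else 0)" using mu_nth[OF l] by (simp only: M_Suc[of "Suc n"])
  also have "\<dots> = 1 - tbar n" using t01 tm by auto
  finally show ?thesis using 1 by simp
qed

lemma tbar_mi: "mi tbar = tbar"
proof
  fix n
  show "mi tbar n = tbar n"
  proof (cases "even n")
    case True then obtain k where "n = 2*k" by blast
    then show ?thesis using tbar_rec by (simp add: mi_def)
  next
    case False then obtain k where "n = Suc (2*k)" by (metis oddE Suc_eq_plus1)
    then show ?thesis using tbar_rec by (simp add: mi_def)
  qed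
qed

lemma tbar0: "tbar 0 = 1" by (simp add: tbar_def)
lemma tbar1: "tbar 1 = 0" using tbar_rec[of 0] tbar0 by simp
lemma tbar2: "tbar 2 = 0" using tbar_rec[of 1] tbar1 by simp
lemma tbar1': "tbar (Suc 0) = 0" using tbar1 by simp

lemma OF_tbar: "OF tbar"
proof -
  have "\<forall>i. \<not> ovl tbar i p" for p
  proof (induction p rule: less_induct)
    case (less p)
    show ?case
    proof (intro allI notI)
      fix i assume "ovl tbar i p"
      then have o: "ovl (mi tbar) i p" by (simp add: tbar_mi)
      from mi_desc[OF bin_tbar o] mi_p[OF bin_tbar o] less show False by (simp add: tbar_mi)
    qed
  qed
  then show ?thesis by (simp add: OF_def)
qed

lemma sqp_mi_even: assumes "sqp (mi y) s" "even s" shows "sqp y (s div 2)"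
proof -
  obtain q where q: "s = 2*q" using assms(2) by blast
  have "y j = y (j + q)" if "j < q" for j
  proof -
    have "mi y (2*j) = mi y (2*j + s)" using assms(1) that q by (simp add: sqp_def)
    then show ?thesis using q by (simp add: mi_def)
  qed
  then show ?thesis using assms(1) q by (simp add: sqp_def)
qed

lemma NSP_tbar: "\<not> sqp tbar s"
proof (induction s rule: less_induct)
  case (less s)
  show ?case
  proof
    assume sq: "sqp tbar s"
    then have s1: "s \<ge> 1" and per: "\<And>j. j < s \<Longrightarrow> tbar j = tbar (j+s)" by (auto simp: sqp_def)
    show False
    proof (cases "even s")
      case True
      have "sqp tbar (s div 2)" using sqp_mi_even[of tbar s] sq True by (simp add: tbar_mi)
      moreover have "s div 2 < s" using s1 by simp
      ultimately show False using less by blast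
    next
      case False
      show False
      proof (cases "s = 1")
        case True then show False using per[of 0] tbar0 tbar1 by simp
      next
        case False
        then have "s \<ge> 3" using s1 \<open>odd s\<close> by presburger
        then have "tbar (1+s) = tbar (2+s)" using per[of 1] per[of 2] tbar1 tbar2 by (simp add: add.commute)
        then have "mi tbar (1+s) = mi tbar (Suc (1+s))" by (simp add: tbar_mi)
        then have "odd (1+s)" by (rule mi_sq_odd)
        then show False using \<open>odd s\<close> by simp
      qed
    qed
  qed
qed

definition zz :: "nat \<Rightarrow> nat" where "zz n = (if n = 0 then 1 else tbar (n-1))"

lemma bin_zz: "bin zz" using bin_tbar by (simp add: bin_def zz_def)

lemma zz_sqp: assumes "sqp zz r" shows "r = 1"
proof (rule ccontr)
  assume r1: "r \<noteq> 1"
  have rr: "r \<ge> 1" and per: "\<And>j. j < r \<Longrightarrow> zz j = zz (j+r)" using assms by (auto simp: sqp_def)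
  show False
  proof (cases "even r")
    case True
    then obtain q where q: "r = 2*q" by blast
    have "tbar k = tbar (k+q)" if "k < q" for k
    proof -
      have "zz (1+2*k) = zz (1+2*k+r)" using per[of "1+2*k"] that q by simp
      then have "tbar (2*k) = tbar (2*k+2*q)" using q by (simp add: zz_def algebra_simps)
      moreover have "2*k+2*q = 2*(k+q)" by simp
      ultimately show ?thesis using tbar_rec[of k] tbar_rec[of "k+q"] by metis
    qed
    then have "sqp tbar q" using rr q by (simp add: sqp_def)
    then show False using NSP_tbar by blast
  next
    case False
    then have r3: "r \<ge> 3" using rr r1 by presburger
    have a: "zz r = 1" using per[of 0] by (simp add: zz_def)
    have z1: "zz 1 = 1" by (simp add: zz_def tbar0)
    have "zz 1 = zz (Suc r)" using per[of 1] r3 by simp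
    then have b: "zz (Suc r) = 1" using z1 by simp
    have a': "tbar (r-1) = 1" using a r3 by (simp add: zz_def)
    have "zz (Suc r) = tbar r" by (simp add: zz_def)
    then have b': "tbar r = 1" using b by simp
    have "tbar (r-1) = tbar r" using a' b' by simp
    then have "mi tbar (r-1) = mi tbar (Suc (r-1))" using r3 by (simp add: tbar_mi)
    then have "odd (r-1)" by (rule mi_sq_odd)
    then show False using False r3 by simp
  qed
qed

lemma OF_zz: "OF zz"
  unfolding OF_def
proof (intro allI notI)
  fix i p assume o: "ovl zz i p"
  then have p1: "p \<ge> 1" and per: "\<And>j. j \<le> p \<Longrightarrow> zz (i+j) = zz (i+j+p)" by (auto simp: ovl_def)
  show False
  proof (cases "i = 0")
    case False
    have "ovl tbar (i-1) p" using p1 per False by (auto simp: ovl_def zz_def)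
    then show False using OF_tbar by (simp add: OF_def)
  next
    case True
    show False
    proof (cases "even p")
      case False
      have a: "zz p = 1" using per[of 0] True by (simp add: zz_def)
      have z1: "zz 1 = 1" by (simp add: zz_def tbar0)
      have "zz 1 = zz (Suc p)" using per[of 1] p1 True by simp
      then have b: "zz (Suc p) = 1" using z1 by simp
      have a': "tbar (p-1) = 1" using a p1 by (simp add: zz_def)
      have "zz (Suc p) = tbar p" by (simp add: zz_def)
      then have b': "tbar p = 1" using b by simp
      have "tbar (p-1) = tbar p" using a' b' by simp
      then have "mi tbar (p-1) = mi tbar (Suc (p-1))" using p1 by (simp add: tbar_mi)
      then have "odd (p-1)" by (rule mi_sq_odd)
      then show False using False p1 by simp
    next
      case True
      have "sqp zz p" using p1 per \<open>i = 0\<close> by (simp add: sqp_def)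
      then show False using zz_sqp True by fastforce
    qed
  qed
qed

definition yy :: "nat \<Rightarrow> nat" where "yy = mi zz"

lemma bin_yy: "bin yy" by (simp add: yy_def bin_mi bin_zz)
lemma OF_yy: "OF yy" by (simp add: yy_def OF_mi bin_zz OF_zz)

lemma yy_vals: "yy 0 = 1" "yy 1 = 0" "yy 2 = 1" "yy 3 = 0" "yy 4 = 0"
  by (simp_all add: yy_def mi_def zz_def tbar0 tbar1 tbar1')
lemma yy1': "yy (Suc 0) = 0" using yy_vals by simp

lemma yy_sqp: assumes "sqp yy q" shows "q = 2"
proof -
  have q1: "q \<ge> 1" and per: "\<And>j. j < q \<Longrightarrow> yy j = yy (j+q)" using assms by (auto simp: sqp_def)
  show ?thesis
  proof (cases "even q")
    case True
    have "sqp zz (q div 2)" using sqp_mi_even[of zz q] assms True by (simp add: yy_def)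
    then have "q div 2 = 1" by (rule zz_sqp)
    then show ?thesis using True by presburger
  next
    case False
    show ?thesis
    proof (cases "q \<le> 3")
      case True
      then have "q = 1 \<or> q = 3" using False q1 by presburger
      then show ?thesis using per[of 0] yy_vals by auto
    next
      case False
      then have "q \<ge> 5" using \<open>odd q\<close> by presburger
      then have "yy (3+q) = yy (4+q)" using per[of 3] per[of 4] yy_vals by (simp add: add.commute)
      then have "mi zz (3+q) = mi zz (Suc (3+q))" by (simp add: yy_def)
      then have "odd (3+q)" by (rule mi_sq_odd)
      then show ?thesis using \<open>odd q\<close> by simp
    qed
  qed
qed

definition TT :: "nat \<Rightarrow> nat" where "TT n = (if n < 2 then 0 else mi yy (n-2))"

lemma yy_tbar: "k \<ge> 2 \<Longrightarrow> yy k = tbar (k-2)"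
proof -
  assume k: "k \<ge> 2"
  have "tbar (k-2) = mi tbar (k-2)" by (simp add: tbar_mi)
  moreover have "(k-2) div 2 = k div 2 - 1" "even (k-2) = even k" using k by auto
  moreover have "k div 2 \<noteq> 0" using k by auto
  then have "zz (k div 2) = tbar (k div 2 - 1)" by (simp add: zz_def)
  ultimately show ?thesis by (simp add: yy_def mi_def)
qed

lemma TT_eq: "prepend [0,0,1,0,0,1] tbar = TT"
proof
  fix n
  show "prepend [0,0,1,0,0,1] tbar n = TT n"
  proof (cases "n < 6")
    case True
    then have "n = 0 \<or> n = 1 \<or> n = 2 \<or> n = 3 \<or> n = 4 \<or> n = 5" by auto
    then show ?thesis by (auto simp: prepend_def TT_def mi_def yy_vals yy1')
  next
    case False
    have "mi yy (n-2) = tbar (n-6)"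
    proof -
      have "tbar (n-6) = mi tbar (n-6)" by (simp add: tbar_mi)
      moreover have "(n-6) div 2 = (n-2) div 2 - 2" "even (n-6) = even (n-2)" using False by auto
      moreover have "yy ((n-2) div 2) = tbar ((n-2) div 2 - 2)" using False by (simp add: yy_tbar)
      ultimately show ?thesis by (simp add: mi_def)
    qed
    moreover have "n - length [0,0,1,0,0,1::nat] = n - 6" by simp
    ultimately show ?thesis using False unfolding prepend_def TT_def by simp
  qed
qed

lemma TT_vals: "TT 0 = 0" "TT 1 = 0" "TT 2 = 1" "TT 3 = 0" "TT 4 = 0" "TT 5 = 1" "TT 6 = 1" "TT 7 = 0"
  by (simp_all add: TT_def mi_def yy_vals yy1')

lemma TT_valsS: "TT (Suc 0) = 0" "TT (Suc (Suc 0)) = 1" "TT (Suc (Suc (Suc 0))) = 0"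
  "TT (Suc (Suc (Suc (Suc 0)))) = 0" "TT (Suc (Suc (Suc (Suc (Suc 0))))) = 1"
  "TT (Suc (Suc (Suc (Suc (Suc (Suc 0)))))) = 1" "TT (Suc (Suc (Suc (Suc (Suc (Suc (Suc 0))))))) = 0"
  using TT_vals by (simp_all add: eval_nat_numeral)

lemma TT_hi: "n \<ge> 2 \<Longrightarrow> TT n = mi yy (n-2)" by (simp add: TT_def)

lemma OF_TT: "OF TT"
  unfolding OF_def
proof (intro allI notI)
  fix i p assume o: "ovl TT i p"
  then have p1: "p \<ge> 1" and per: "\<And>j. j \<le> p \<Longrightarrow> TT (i+j) = TT (i+j+p)" by (auto simp: ovl_def)
  have Omy: "OF (mi yy)" using OF_mi bin_yy OF_yy by blast
  show False
  proof (cases "i \<ge> 2")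
    case True
    have "mi yy (i-2+j) = mi yy (i-2+j+p)" if "j \<le> p" for j
      using per[OF that] True by (simp add: TT_def)
    then have "ovl (mi yy) (i-2) p" using p1 by (simp add: ovl_def)
    then show False using Omy by (simp add: OF_def)
  next
    case False
    then have i01: "i = 0 \<or> i = 1" by auto
    show False
    proof (cases "even p")
      case False
      show False
      proof (cases "p \<le> 3")
        case True
        then have "p = 1 \<or> p = 3" using False p1 by presburger
        then show False using i01 per[of 0] per[of 1] per[of 2] per[of 3] TT_vals TT_valsS by auto
      next
        case False
        then have p5: "p \<ge> 5" using \<open>odd p\<close> by presburger
        have e3: "i + (3-i) = 3" "i + (4-i) = 4" using i01 by auto
        have "TT (i + (3-i)) = TT (i + (3-i) + p)" using per[of "3-i"] p5 by auto
        then have "TT 3 = TT (3+p)" unfolding e3 by (simp add: add.commute)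
        moreover have "TT (i + (4-i)) = TT (i + (4-i) + p)" using per[of "4-i"] p5 by auto
        then have "TT 4 = TT (4+p)" unfolding e3 by (simp add: add.commute)
        ultimately have "TT (3+p) = TT (4+p)" using TT_vals by simp
        then have "mi yy (1+p) = mi yy (Suc (1+p))" by (simp add: TT_def)
        then have "odd (1+p)" by (rule mi_sq_odd)
        then show False using \<open>odd p\<close> by simp
      qed
    next
      case True
      then have p2: "p \<ge> 2" using p1 by presburger
      show False
      proof (cases "i = 0")
        case True
        have "TT 0 = TT p" using per[of 0] True by simp
        moreover have "TT 1 = TT (Suc p)" using per[of 1] True p1 by simp
        ultimately have "TT p = TT (Suc p)" using TT_vals by simp
        moreover have "Suc (p-2) = p - 1" using p2 by simp
        ultimately have "mi yy (p-2) = mi yy (Suc (p-2))" using p2 by (simp add: TT_def)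
        then have "odd (p-2)" by (rule mi_sq_odd)
        then show False using \<open>even p\<close> p2 by simp
      next
        case False
        then have i1: "i = 1" using i01 by simp
        obtain q where q: "p = 2*q" using \<open>even p\<close> by blast
        have "yy k = yy (k+q)" if "k < q" for k
        proof -
          have "TT (2+2*k) = TT (2+2*k+p)" using per[of "1+2*k"] i1 that q by simp
          then have "mi yy (2*k) = mi yy (2*(k+q))" using q by (simp add: TT_def algebra_simps)
          then show ?thesis by (simp add: mi_def)
        qed
        then have "sqp yy q" using q p1 by (simp add: sqp_def)
        then have "q = 2" by (rule yy_sqp)
        then show False using per[of 0] i1 q TT_vals by simp
      qed
    qed
  qed
qed

lemma mk_ovl1: "w i = w (i+1) \<Longrightarrow> w (i+1) = w (i+2) \<Longrightarrow> ovl w i 1"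
  unfolding ovl_def by (auto simp: le_Suc_eq)

lemma mk_ovl2: "w i = w (i+2) \<Longrightarrow> w (i+1) = w (i+3) \<Longrightarrow> w (i+2) = w (i+4) \<Longrightarrow> ovl w i 2"
  unfolding ovl_def
proof (intro conjI allI impI)
  fix j :: nat assume "j \<le> 2" "w i = w (i+2)" "w (i+1) = w (i+3)" "w (i+2) = w (i+4)"
  then show "w (i+j) = w (i+j+2)" by (auto simp: le_Suc_eq eval_nat_numeral)
qed simp

lemma mk_ovl3: "w i = w (i+3) \<Longrightarrow> w (i+1) = w (i+4) \<Longrightarrow> w (i+2) = w (i+5) \<Longrightarrow> w (i+3) = w (i+6) \<Longrightarrow> ovl w i 3"
  unfolding ovl_def
proof (intro conjI allI impI)
  fix j :: nat assume "j \<le> 3" "w i = w (i+3)" "w (i+1) = w (i+4)" "w (i+2) = w (i+5)" "w (i+3) = w (i+6)"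
  then show "w (i+j) = w (i+j+3)" by (auto simp: le_Suc_eq eval_nat_numeral)
qed simp

lemma OFno: "OF w \<Longrightarrow> ovl w i p \<Longrightarrow> False" by (simp add: OF_def)

lemma sq_no3: "OF v \<Longrightarrow> v i = v (i+1) \<Longrightarrow> v (i+1) \<noteq> v (i+2)"
  using mk_ovl1 OFno by blast

lemma no_alt4:
  assumes "bin v" "OF v" "v m \<noteq> v (m+1)" "v (m+1) \<noteq> v (m+2)" "v (m+2) \<noteq> v (m+3)" "v (m+3) \<noteq> v (m+4)"
  shows False
proof -
  have b: "v m \<le> 1" "v (m+1) \<le> 1" "v (m+2) \<le> 1" "v (m+3) \<le> 1" "v (m+4) \<le> 1" using assms(1) by (auto simp: bin_def)
  have "v m = v (m+2)" "v (m+1) = v (m+3)" "v (m+2) = v (m+4)" using b assms(3-6) by arith+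
  then have "ovl v m 2" by (rule mk_ovl2)
  then show False using assms(2) OFno by blast
qed

lemma no_gap3:
  assumes "bin v" "OF v" "i \<ge> 1" "v i = v (i+1)" "v (i+1) \<noteq> v (i+2)" "v (i+2) \<noteq> v (i+3)" "v (i+3) = v (i+4)"
  shows False
proof -
  obtain h where h: "i = h + 1" using assms(3) by (metis le_add_diff_inverse2)
  have b: "v h \<le> 1" "v (h+1) \<le> 1" "v (h+2) \<le> 1" "v (h+3) \<le> 1" "v (h+4) \<le> 1" "v (h+5) \<le> 1" "v (h+6) \<le> 1"
    using assms(1) by (auto simp: bin_def)
  have a: "v (h+1) = v (h+2)" "v (h+2) \<noteq> v (h+3)" "v (h+3) \<noteq> v (h+4)" "v (h+4) = v (h+5)"
    using assms(4-7) h by (simp_all add: eval_nat_numeral)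
  have c1: "v h \<noteq> v (h+1)"
  proof
    assume "v h = v (h+1)"
    then have "ovl v h 1" using a mk_ovl1 by simp
    then show False using assms(2) OFno by blast
  qed
  have c2: "v (h+5) \<noteq> v (h+6)" using sq_no3[OF assms(2), of "h+4"] a(4) by (simp add: eval_nat_numeral)
  have "v h = v (h+3)" "v (h+1) = v (h+4)" "v (h+2) = v (h+5)" "v (h+3) = v (h+6)"
    using a b c1 c2 by arith+
  then have "ovl v h 3" by (rule mk_ovl3)
  then show False using assms(2) OFno by blast
qed

lemma sq_par:
  assumes "bin v" "OF v"
  shows "i \<ge> 1 \<Longrightarrow> v i = v (i+1) \<Longrightarrow> v (i+2*n+1) \<noteq> v (i+2*n+2)"
proof (induction n arbitrary: i rule: less_induct)
  case (less n)
  have n1: "v (i+1) \<noteq> v (i+2)" using sq_no3[OF assms(2)] less.prems by blast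
  show ?case
  proof (cases "n = 0")
    case True then show ?thesis using n1 by simp
  next
    case False
    have n3: "v (i+3) \<noteq> v (i+4)"
    proof
      assume s3: "v (i+3) = v (i+4)"
      show False
      proof (cases "v (i+2) = v (i+3)")
        case True
        then show False using sq_no3[OF assms(2), of "i+2"] s3 by (simp add: eval_nat_numeral)
      next
        case False
        show False using no_gap3[OF assms less.prems(1) less.prems(2) n1 False s3] .
      qed
    qed
    show ?thesis
    proof (cases "n = 1")
      case True then show ?thesis using n3 by (simp add: eval_nat_numeral)
    next
      case False
      then have n2: "n \<ge> 2" using \<open>n \<noteq> 0\<close> by simp
      show ?thesis
      proof (cases "v (i+2) = v (i+3)")
        case True
        have F: "v (i+2 + 2*(n-1) + 1) \<noteq> v (i+2 + 2*(n-1) + 2)"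
        proof (rule less.IH)
          show "n - 1 < n" using n2 by simp
          show "1 \<le> i + 2" by simp
          show "v (i+2) = v (i+2+1)" using True by (simp add: eval_nat_numeral)
        qed
        have eq: "i+2 + 2*(n-1) = i + 2*n" using n2 by simp
        from F show ?thesis unfolding eq .
      next
        case False
        have s4: "v (i+4) = v (i+5)"
        proof (rule ccontr)
          assume "v (i+4) \<noteq> v (i+5)"
          then show False using no_alt4[OF assms, of "i+1"] n1 False n3 by (simp add: eval_nat_numeral)
        qed
        have F: "v (i+4 + 2*(n-2) + 1) \<noteq> v (i+4 + 2*(n-2) + 2)"
        proof (rule less.IH)
          show "n - 2 < n" using n2 by simp
          show "1 \<le> i + 4" by simp
          show "v (i+4) = v (i+4+1)" using s4 by (simp add: eval_nat_numeral)
        qed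
        have eq: "i+4 + 2*(n-2) = i + 2*n" using n2 by simp
        from F show ?thesis unfolding eq .
      qed
    qed
  qed
qed

lemma rep_mi:
  assumes "bin v" "\<forall>j. v (k+2*j) \<noteq> v (k+2*j+1)"
  shows "v (k+m) = mi (\<lambda>n. v (k+2*n)) m"
proof (cases "even m")
  case True
  then obtain a where "m = 2*a" by blast
  then show ?thesis by (simp add: mi_def)
next
  case False
  then obtain a where a: "m = 2*a+1" using oddE by blast
  have "v (k+2*a) \<le> 1" "v (k+2*a+1) \<le> 1" using assms(1) by (auto simp: bin_def)
  moreover have "v (k+2*a) \<noteq> v (k+2*a+1)" using assms(2) by blast
  ultimately have "v (k+2*a+1) = 1 - v (k+2*a)" by arith
  then show ?thesis using a by (simp add: mi_def add.assoc)
qed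

lemma factorize:
  assumes "bin v" "OF v"
  shows "\<exists>k u. (k = 1 \<or> k = 2) \<and> bin u \<and> (\<forall>m. v (k+m) = mi u m)"
proof (cases "\<forall>j. v (1+2*j) \<noteq> v (1+2*j+1)")
  case True
  have "bin (\<lambda>n. v (1+2*n))" using assms(1) by (simp add: bin_def)
  then show ?thesis using rep_mi[OF assms(1) True] by blast
next
  case False
  then obtain j0 where j0: "v (1+2*j0) = v (1+2*j0+1)" by blast
  have "v (2+2*j) \<noteq> v (2+2*j+1)" for j
  proof (cases "j0 \<le> j")
    case True
    have "v (1+2*j0 + 2*(j-j0) + 1) \<noteq> v (1+2*j0 + 2*(j-j0) + 2)"
      using sq_par[OF assms, of "1+2*j0" "j-j0"] j0 by simp
    moreover have "1+2*j0 + 2*(j-j0) + 1 = 2+2*j" using True by simp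
    ultimately show ?thesis by (simp add: add.assoc)
  next
    case False
    show ?thesis
    proof
      assume s: "v (2+2*j) = v (2+2*j+1)"
      have "v (2+2*j + 2*(j0-j-1) + 1) \<noteq> v (2+2*j + 2*(j0-j-1) + 2)"
        using sq_par[OF assms, of "2+2*j" "j0-j-1"] s by simp
      moreover have "2+2*j + 2*(j0-j-1) + 1 = 1+2*j0" using False by simp
      ultimately show False using j0 by (simp add: add.assoc)
    qed
  qed
  then have h: "\<forall>j. v (2+2*j) \<noteq> v (2+2*j+1)" by blast
  have "bin (\<lambda>n. v (2+2*n))" using assms(1) by (simp add: bin_def)
  then show ?thesis using rep_mi[OF assms(1) h] by blast
qed

lemma L1: "bin v \<Longrightarrow> OF v \<Longrightarrow> v 0 = 1 \<Longrightarrow> (\<forall>i<n. v i = tbar i) \<Longrightarrow> v n < tbar n \<Longrightarrow> False"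
proof (induction n arbitrary: v rule: less_induct)
  case (less n)
  have n0: "n \<noteq> 0"
  proof
    assume "n = 0" then show False using less.prems(3,5) tbar0 by simp
  qed
  have k0: False if bu: "bin u" and vu: "\<forall>m. v m = mi u m" for u
  proof -
    have u0: "u 0 = 1" using vu less.prems(3) by (metis mi_def div_0 even_zero)
    have Ou: "OF u"
      unfolding OF_def
    proof (intro allI notI)
      fix i p assume "ovl u i p"
      then have "ovl (mi u) (2*i) (2*p)" by (rule ovl_mi)
      then have "ovl v (2*i) (2*p)" using vu by (simp add: ovl_def)
      then show False using less.prems(2) OFno by blast
    qed
    have ag: "\<forall>i < n div 2. u i = tbar i"
    proof (intro allI impI)
      fix i assume "i < n div 2"
      then have "2*i < n" by simp
      then have "v (2*i) = tbar (2*i)" using less.prems(4) by blast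
      then show "u i = tbar i" using vu tbar_rec[of i] by (simp add: mi_def)
    qed
    have lt: "u (n div 2) < tbar (n div 2)"
    proof (cases "even n")
      case True
      then obtain a where a: "n = 2*a" by blast
      then show ?thesis using less.prems(5) vu tbar_rec[of a] by (simp add: mi_def)
    next
      case False
      then obtain a where a: "n = 2*a+1" using oddE by blast
      have "v (2*a) = tbar (2*a)" using less.prems(4) a by simp
      then have "u a = tbar a" using vu tbar_rec[of a] by (simp add: mi_def)
      then have "v n = tbar n" using vu a tbar_rec[of a] by (simp add: mi_def)
      then show ?thesis using less.prems(5) by simp
    qed
    show False using less.IH[of "n div 2" u] n0 bu Ou u0 ag lt by simp
  qed
  obtain k u where ku: "k = 1 \<or> k = 2" "bin u" "\<forall>m. v (k+m) = mi u m"
    using factorize[OF less.prems(1,2)] by blast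
  have t12: "tbar 1 = 0" "tbar 2 = 0" using tbar1 tbar2 by auto
  show False
  proof (cases "k = 1")
    case True
    have v1: "v 1 = u 0" using ku(3)[rule_format, of 0] True by (simp add: mi_def)
    have v2: "v 2 = 1 - u 0" using ku(3)[rule_format, of 1] True by (simp add: mi_def numeral_2_eq_2)
    show False
    proof (cases "n = 1")
      case True then show False using less.prems(5) t12 by simp
    next
      case False
      then have "v 1 = 0" using n0 less.prems(4) t12 by auto
      then have "v 2 = 1" using v1 v2 by simp
      show False
      proof (cases "n = 2")
        case True then show False using less.prems(5) t12 by simp
      next
        case False
        then have "2 < n" using n0 \<open>n \<noteq> 1\<close> by simp
        then have "v 2 = tbar 2" using less.prems(4) by blast
        then show False using \<open>v 2 = 1\<close> t12 by simp
      qed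
    qed
  next
    case False
    then have k2: "k = 2" using ku(1) by simp
    show False
    proof (cases "n = 1")
      case True then show False using less.prems(5) t12 by simp
    next
      case False
      then have v1: "v 1 = 0" using n0 less.prems(4) t12 by auto
      define u' where "u' m = (if m = 0 then 1 else u (m-1))" for m
      have bu': "bin u'" using ku(2) by (simp add: bin_def u'_def)
      have "v m = mi u' m" for m
      proof (cases "m \<ge> 2")
        case True
        have "v (2 + (m-2)) = mi u (m-2)" using ku(3)[rule_format, of "m-2"] k2 by simp
        moreover have "2 + (m-2) = m" using True by simp
        ultimately have "v m = mi u (m-2)" by simp
        moreover have "(m-2) div 2 = m div 2 - 1" "even (m-2) = even m" "m div 2 \<noteq> 0" using True by auto
        ultimately show ?thesis by (simp add: mi_def u'_def)
      next
        case False
        then have "m = 0 \<or> m = 1" by auto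
        then show ?thesis using v1 less.prems(3) by (auto simp: mi_def u'_def)
      qed
      then show False using k0 bu' by blast
    qed
  qed
qed

lemma TT_tail: "TT (6+i) = tbar i"
  using fun_cong[OF TT_eq, of "6+i"] by (simp add: prepend_def)

lemma bin_TT: "bin TT"
  using bin_mi[OF bin_yy] by (auto simp: bin_def TT_def)

lemma not_less_T:
  assumes bw: "bin w" and ow: "OF w" and lt: "lex_less w TT" shows False
proof -
  obtain n where ag: "\<forall>i<n. w i = TT i" and ln: "w n < TT n" using lt unfolding lex_less_def by blast
  show False
  proof (cases "n \<le> 6")
    case True
    then have "n = 0 \<or> n = 1 \<or> n = 2 \<or> n = 3 \<or> n = 4 \<or> n = 5 \<or> n = 6" by auto
    moreover have False if "n = 2"
    proof -
      have "w 0 = 0" "w 1 = 0" "w 2 = 0" using ag ln that TT_vals by auto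
      then have "ovl w 0 1" by (intro mk_ovl1) (simp_all add: eval_nat_numeral)
      then show False using ow OFno by blast
    qed
    moreover have False if "n = 5"
    proof -
      have "w 3 = 0" "w 4 = 0" "w 5 = 0" using ag ln that TT_vals by auto
      then have "ovl w 3 1" by (intro mk_ovl1) (simp_all add: eval_nat_numeral)
      then show False using ow OFno by blast
    qed
    moreover have False if "n = 6"
    proof -
      have "w 0 = 0" "w 1 = 0" "w 2 = 1" "w 3 = 0" "w 4 = 0" "w 5 = 1" "w 6 = 0" using ag ln that TT_vals by auto
      then have "ovl w 0 3" by (intro mk_ovl3) (simp_all add: eval_nat_numeral)
      then show False using ow OFno by blast
    qed
    ultimately show False using ln TT_vals by auto
  next
    case False
    define v where "v i = w (6+i)" for i
    have bv: "bin v" using bw by (simp add: bin_def v_def)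
    have ov: "OF v" unfolding OF_def
    proof (intro allI notI)
      fix i p assume "ovl v i p"
      then have "ovl w (6+i) p" by (simp add: ovl_def v_def add.assoc)
      then show False using ow OFno by blast
    qed
    have v0: "v 0 = 1" using ag False TT_vals by (simp add: v_def)
    have agv: "\<forall>i<n-6. v i = tbar i"
    proof (intro allI impI)
      fix i assume "i < n-6"
      then have "6+i < n" by simp
      then show "v i = tbar i" using ag TT_tail by (simp add: v_def)
    qed
    have "v (n-6) < tbar (n-6)" using ln TT_tail[of "n-6"] False by (simp add: v_def)
    then show False using L1[OF bv ov v0 agv] by blast
  qed
qed

theorem theorem5:
  shows "binary_word (prepend [0,0,1,0,0,1] tbar)
       \<and> overlap_free (prepend [0,0,1,0,0,1] tbar)
       \<and> (\<forall>w. binary_word w \<and> overlap_free w \<longrightarrow> lex_le (prepend [0,0,1,0,0,1] tbar) w)"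
proof (intro conjI allI impI)
  have "TT i \<in> {0,1}" for i using bin_TT unfolding bin_def by (metis insert_iff le_neq_implies_less less_one)
  then show "binary_word (prepend [0,0,1,0,0,1] tbar)" unfolding TT_eq binary_word_def by blast
  show "overlap_free (prepend [0,0,1,0,0,1] tbar)" unfolding TT_eq OF_iff by (rule OF_TT)
  fix w assume a: "binary_word w \<and> overlap_free w"
  have h: "w i \<in> {0,1}" for i using a unfolding binary_word_def by blast
  have "w i \<le> 1" for i using h[of i] by auto
  then have bw: "bin w" unfolding bin_def by blast
  have ow: "OF w" using a OF_iff by blast
  show "lex_le (prepend [0,0,1,0,0,1] tbar) w"
    unfolding TT_eq lex_le_def
  proof (cases "TT = w")
    case True then show "TT = w \<or> lex_less TT w" by simp
  next
    case False
    then have "\<exists>n. TT n \<noteq> w n" by auto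
    then obtain n where n: "TT n \<noteq> w n" "\<forall>m<n. \<not> TT m \<noteq> w m" using exists_least_iff[of "\<lambda>n. TT n \<noteq> w n"] by blast
    show "TT = w \<or> lex_less TT w"
    proof (cases "TT n < w n")
      case True then show ?thesis using n unfolding lex_less_def by auto
    next
      case False
      then have "w n < TT n" using n(1) by simp
      moreover have "\<forall>i<n. w i = TT i" using n(2) by simp
      ultimately have "lex_less w TT" unfolding lex_less_def by blast
      then show ?thesis using not_less_T[OF bw ow] by blast
    qed
  qed
qed

end
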